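(* Let $c>0$ and $F_c(t)=\log\big(1+2c\sinh\frac{t}{2}\big)$ for $t>0$. The function $t\mapsto F_c(t)/t$ is decreasing from $(0,\infty)$ onto $(1/2,c)$ if and only if $c\ge 1$. *)

theory Defs
  imports Complex_Main
begin

definition F :: "real \<Rightarrow> real \<Rightarrow> real" where
  "F c t = ln (1 + 2 * c * sinh (t / 2))"

end

theory Submission
  imports Defs "HOL-Real_Asymp.Real_Asymp"
begin

lemma key:
  fixes x c :: real
  assumes x: "x > 1" and c: "c \<ge> 1"
  shows "c*(x^2+1)*ln x < (c*x^2+x-c) * ln((c*x^2+x-c)/x)"
proof -
  define P where "P = c*x^2+x-c"
  have Pgt: "P - x^2 > 0" unfolding P_def
  proof -
    have "(c-1)*(x^2-1) \<ge> 0" using x c by (simp add: mult_nonneg_nonneg)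
    thus "c * x\<^sup>2 + x - c - x\<^sup>2 > 0" using x by (simp add: algebra_simps)
  qed
  have x2: "x^2 > 0" using x by simp
  have P0: "P > 0" using Pgt x2 by linarith
  have lnx: "ln x > 0" using x by simp
  have l1: "ln (P/x^2) \<ge> (P - x^2)/P"
  proof -
    have "ln (x^2/P) \<le> x^2/P - 1" using P0 x2 by (intro ln_le_minus_one) simp
    also have "ln (x^2/P) = - ln (P/x^2)" using P0 x2 by (simp add: ln_div)
    also have "x^2/P - 1 = - ((P-x^2)/P)" using P0 by (simp add: field_simps)
    finally show ?thesis by simp
  qed
  have l2: "(2*c - x) * ln x < P - x^2"
  proof (cases "2*c - x \<ge> 0")
    case True
    have "(2*c - x) * ln x \<le> (2*c-x)*(x-1)" using True ln_le_minus_one[of x] x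
      by (intro mult_left_mono) auto
    also have "\<dots> < P - x^2" unfolding P_def
    proof -
      have "c*(x-1)^2 > 0" using x c by simp
      thus "(2 * c - x) * (x - 1) < c * x\<^sup>2 + x - c - x\<^sup>2" by (simp add: power2_eq_square algebra_simps)
    qed
    finally show ?thesis .
  next
    case False
    hence "(2*c - x) * ln x < 0" using lnx by (simp add: mult_neg_pos)
    thus ?thesis using Pgt by linarith
  qed
  have "c*(x^2+1)*ln x = P * ln x + (2*c-x)*ln x" unfolding P_def by (simp add: algebra_simps)
  also have "\<dots> < P * ln x + (P - x^2)" using l2 by simp
  also have "\<dots> \<le> P * ln x + P * ln (P/x^2)" using l1 P0 by (simp add: field_simps)
  also have "\<dots> = P * ln (P/x)"
  proof -
    have "ln (P/x) = ln x + ln (P/x^2)" using P0 x by (simp add: ln_div ln_mult power2_eq_square)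
    thus ?thesis by (simp add: algebra_simps)
  qed
  finally show ?thesis unfolding P_def .
qed

lemma lim_top: assumes "c > 0" shows "((\<lambda>t. F c t / t) \<longlongrightarrow> 1/2) at_top"
  using assms unfolding F_def by real_asymp

lemma lim0: assumes "c > 0" shows "((\<lambda>t. F c t / t) \<longlongrightarrow> c) (at_right 0)"
  using assms unfolding F_def by real_asymp


lemma sinh_exp: fixes c t :: real shows "1 + 2*c*sinh (t/2) = (c*(exp(t/2))^2 + exp(t/2) - c)/exp(t/2)"
  and cosh_exp: "cosh (t/2) = ((exp(t/2))^2 + 1)/(2*exp(t/2))"
  by (simp_all add: sinh_def cosh_def exp_minus field_simps power2_eq_square)

lemma pos_arg: fixes c t :: real assumes "c > 0" "t \<ge> 0" shows "1 + 2*c*sinh (t/2) > 0"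
proof -
  have "sinh (t/2) \<ge> 0" using assms by simp
  thus ?thesis using assms by (simp add: add_pos_nonneg)
qed

lemma derivF: assumes "c > 0" "t \<ge> 0"
  shows "(F c has_real_derivative c*cosh(t/2)/(1+2*c*sinh(t/2))) (at t)"
proof -
  have p: "1 + 2*c*sinh (t/2) > 0" using pos_arg assms .
  have "((\<lambda>t. ln (1 + 2*c*sinh (t/2))) has_real_derivative
     (1/(1 + 2*c*sinh (t/2))) * (2*c*(cosh(t/2)*(1/2)))) (at t)"
    by (rule DERIV_chain2[where f=ln]) (use p in \<open>auto intro!: derivative_eq_intros\<close>)
  thus ?thesis unfolding F_def[abs_def] by (simp add: field_simps)
qed

lemma derivg: assumes "c > 0" "t > 0"
  shows "((\<lambda>t. F c t / t) has_real_derivative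
     ((c*cosh(t/2)/(1+2*c*sinh(t/2))) * t - F c t) / (t*t)) (at t)"
  using DERIV_divide[OF derivF[OF assms(1)] DERIV_ident, of t] assms by simp

lemma contg: assumes "c > 0" "t > 0" shows "isCont (\<lambda>t. F c t / t) t"
  using DERIV_isCont[OF derivg[OF assms]] .

lemma derivneg: assumes "c \<ge> 1" "t > 0"
  shows "((c*cosh(t/2)/(1+2*c*sinh(t/2))) * t - F c t) / (t*t) < 0"
proof -
  define x where "x = exp (t/2)"
  have x1: "x > 1" unfolding x_def using assms by simp
  have lx: "ln x = t/2" unfolding x_def by simp
  define P where "P = c*x^2+x-c"
  have P0: "P > 0" unfolding P_def
  proof -
    have "(c-1)*(x^2-1) \<ge> 0" using x1 assms by (simp add: mult_nonneg_nonneg)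
    moreover have "x^2 > 1" using x1 by (simp add: one_less_power)
    moreover have "c*x^2 + x - c = (c-1)*(x^2-1) + x^2 - 1 + x" by (simp add: algebra_simps)
    ultimately show "c * x\<^sup>2 + x - c > 0" using x1 by linarith
  qed
  have k: "c*(x^2+1)*ln x < P * ln(P/x)" using key[OF x1 assms(1)] unfolding P_def .
  have e1: "1+2*c*sinh(t/2) = P/x" unfolding P_def x_def by (rule sinh_exp)
  have e2: "cosh(t/2) = (x^2+1)/(2*x)" unfolding x_def by (rule cosh_exp)
  have "(c*cosh(t/2)/(1+2*c*sinh(t/2))) * t = c*(x^2+1)*ln x / P"
    unfolding e1 e2 lx using x1 P0 by (simp add: field_simps)
  also have "\<dots> < ln (P/x)" using k P0 by (simp add: field_simps)
  also have "ln (P/x) = F c t" unfolding F_def e1 ..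
  finally show ?thesis using assms by (simp add: divide_neg_pos)
qed

theorem lemma3p4:
  fixes c :: real
  assumes "c > 0"
  shows "(strict_antimono_on {0<..} (\<lambda>t. F c t / t) \<and>
          (\<lambda>t. F c t / t) ` {0<..} = {1/2<..<c}) \<longleftrightarrow> c \<ge> 1"
proof
  assume H: "strict_antimono_on {0<..} (\<lambda>t. F c t / t) \<and>
          (\<lambda>t. F c t / t) ` {0<..} = {1/2<..<c}"
  show "c \<ge> 1"
  proof (rule ccontr)
    assume "\<not> c \<ge> 1"
    hence c1: "c < 1" by simp
    define x where "x = 1/(1-c)"
    define t where "t = 2 * ln x"
    have x1: "x > 1" unfolding x_def using c1 assms by (simp add: field_simps)
    have t0: "t > 0" unfolding t_def using x1 by simp
    have ex: "exp (t/2) = x" unfolding t_def using x1 by simp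
    define P where "P = c*x^2+x-c"
    have P0: "P > 0" unfolding P_def
    proof -
      have "c*(x^2-1) \<ge> 0" using x1 assms by simp
      thus "c * x\<^sup>2 + x - c > 0" using x1 by (simp add: algebra_simps)
    qed
    have xc: "x*(1-c) = 1" unfolding x_def using c1 by simp
    have "(c-1)*x^2 = - (x*(1-c))*x" by (simp add: algebra_simps power2_eq_square)
    hence "(c-1)*x^2 + x - c = -c" using xc by simp
    hence Plt: "P < x^2" unfolding P_def using assms by (simp add: algebra_simps)
    have "F c t = ln (P/x)" unfolding F_def sinh_exp ex P_def ..
    also have "\<dots> < ln x" using P0 x1 Plt by (simp add: field_simps power2_eq_square)
    also have "ln x = t/2" unfolding t_def by simp
    finally have "F c t / t < 1/2" using t0 by (simp add: field_simps)
    moreover have "F c t / t \<in> {1/2<..<c}" using H t0 by blast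
    ultimately show False by simp
  qed
next
  assume c1: "c \<ge> 1"
  let ?g = "\<lambda>t. F c t / t"
  have mono: "?g b < ?g a" if "0 < a" "a < b" for a b
  proof (rule DERIV_neg_imp_decreasing[OF that(2)])
    fix x assume "a \<le> x" "x \<le> b"
    hence x0: "x > 0" using that by simp
    show "\<exists>y. (?g has_real_derivative y) (at x) \<and> y < 0"
      using derivg[OF assms x0] derivneg[OF c1 x0] by blast
  qed
  have sa: "strict_antimono_on {0<..} ?g"
    by (rule monotone_onI) (use mono in auto)
  have cont: "continuous_on {a..b} ?g" if "a > 0" for a b
    using that contg[OF assms] by (intro continuous_at_imp_continuous_on) auto
  have L0: "(?g \<longlongrightarrow> c) (at_right 0)" using lim0[OF assms] .
  have Ltop: "(?g \<longlongrightarrow> 1/2) at_top" using lim_top[OF assms] .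
  have "?g ` {0<..} = {1/2<..<c}"
  proof
    show "?g ` {0<..} \<subseteq> {1/2<..<c}"
    proof
      fix y assume "y \<in> ?g ` {0<..}"
      then obtain t where t: "t > 0" "y = ?g t" by auto
      have "?g (t/2) \<le> c"
      proof (rule tendsto_lowerbound[OF L0])
        show "\<forall>\<^sub>F s in at_right 0. ?g (t/2) \<le> ?g s"
          unfolding eventually_at_right_field
        proof (intro exI[of _ "t/2"] conjI allI impI)
          show "0 < t/2" using t by simp
          fix s :: real assume "0 < s" "s < t/2"
          thus "?g (t/2) \<le> ?g s" using mono[of s "t/2"] by simp
        qed
      qed simp
      moreover have "?g (2*t) \<ge> 1/2"
      proof (rule tendsto_upperbound[OF Ltop])
        show "\<forall>\<^sub>F s in at_top. ?g s \<le> ?g (2*t)"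
          unfolding eventually_at_top_linorder using t
          by (intro exI[of _ "3*t"]) (auto intro!: less_imp_le mono)
      qed simp
      moreover have "?g t < ?g (t/2)" using mono[of "t/2" t] t by simp
      moreover have "?g (2*t) < ?g t" using mono[of t "2*t"] t by simp
      ultimately have "1/2 < ?g t" "?g t < c" by linarith+
      thus "y \<in> {1/2<..<c}" using t by simp
    qed
  next
    show "{1/2<..<c} \<subseteq> ?g ` {0<..}"
    proof
      fix y :: real assume y: "y \<in> {1/2<..<c}"
      have "\<forall>\<^sub>F s in at_right 0. ?g s > y" using order_tendstoD(1)[OF L0] y by auto
      then obtain a where a: "a > 0" "?g a > y"
        unfolding eventually_at_right_field by (metis half_gt_zero less_add_same_cancel1 field_sum_of_halves)
      have "\<forall>\<^sub>F s in at_top. ?g s < y" using order_tendstoD(2)[OF Ltop] y by auto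
      then obtain N where N: "\<And>s. s \<ge> N \<Longrightarrow> ?g s < y" unfolding eventually_at_top_linorder by blast
      define b where "b = max N (a+1)"
      have b: "?g b < y" "a \<le> b" using N unfolding b_def by auto
      from IVT2'[of ?g b y a, OF less_imp_le[OF b(1)] less_imp_le[OF a(2)] b(2) cont[OF a(1)]]
      obtain s where "a \<le> s" "s \<le> b" "?g s = y" by blast
      thus "y \<in> ?g ` {0<..}" using a by force
    qed
  qed
  with sa show "strict_antimono_on {0<..} ?g \<and> ?g ` {0<..} = {1/2<..<c}" by simp
qed

end
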